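(* Let $k_1,k_2\ge1$ be integers. The submodule $\mathcal{J}^{12}$ of $\mathcal{F}$ generated by $\{R_{12}^{n_1,n_2,n_3}:n_i\in\mathbb{Z}\}$ equals the submodule $\mathcal{J}^{12}_{\mathbb{R},[\frac{k_2}{2},\infty)}$ generated by $J^{12}_{\mathbb{R},[\frac{k_2}{2},\infty)}=\{R^{n_1,n_2,n_3}_{12}:n_1\in\mathbb{Z},\ n_2\in\mathbb{Z},\ n_2\ge k_2/2,\ n_3\ge 0\}$.
   Context: $\mathcal{F}$ is the free $\mathbb{Z}[A^{\pm1}]$-module with basis the symbols $s_1^{l_1}s_2^{l_2}s_3^{l_3}$, $l_i\ge 0$, extended multilinearly to integer exponents by $s_i^{-1}=0$ and $s_i^{n}=-s_i^{-n-2}$ for $n\le -2$. For $n_i\in\mathbb{Z}$, $R_{12}(n_1,n_2,n_3)=-A^{-n_1-n_2-2}s_1^{n_1}s_2^{n_2}s_3^{n_3}-A^{-n_1-n_2+2}s_1^{n_1-2}s_2^{n_2-2}s_3^{n_3}-A^{-n_1-n_2}s_1^{n_1-1}s_2^{n_2-1}s_3^{n_3+1}-A^{-n_1-n_2}s_1^{n_1-1}s_2^{n_2-1}s_3^{n_3-1}$ and $R_{12}^{n_1,n_2,n_3}=R_{12}(n_1,n_2,n_3)-R_{12}(-n_1+k_1,-n_2+k_2,n_3)$. *)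

theory Defs
  imports Main "HOL-Library.Poly_Mapping"
begin

(* An element of F = Z[A,A^-1]-module freely spanned by s1^l1 s2^l2 s3^l3 (l_i >= 0)
   is represented by its finitely supported coefficient function:
   (e,(l1,l2,l3)) |-> integer coefficient of A^e s1^l1 s2^l2 s3^l3. *)
type_synonym FF = "(int \<times> nat \<times> nat \<times> nat) \<Rightarrow>\<^sub>0 int"

lift_definition mulA :: "int \<Rightarrow> FF \<Rightarrow> FF"
  is "\<lambda>d f (e, m). f (e - d, m)"
proof -
  fix d :: int and f :: "int \<times> nat \<times> nat \<times> nat \<Rightarrow> int"
  assume fin: "finite {x. f x \<noteq> 0}"
  have "{x. (case x of (e, m) \<Rightarrow> f (e - d, m)) \<noteq> 0}
        = (\<lambda>(e, m). (e + d, m)) ` {x. f x \<noteq> 0}"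
    by (force simp: image_iff split: prod.splits)
  then show "finite {x. (case x of (e, m) \<Rightarrow> f (e - d, m)) \<noteq> 0}"
    using fin by simp
qed

inductive_set span_F :: "FF set \<Rightarrow> FF set" for S :: "FF set" where
  gen: "x \<in> S \<Longrightarrow> x \<in> span_F S"
| zero: "0 \<in> span_F S"
| add: "x \<in> span_F S \<Longrightarrow> y \<in> span_F S \<Longrightarrow> x + y \<in> span_F S"
| neg: "x \<in> span_F S \<Longrightarrow> - x \<in> span_F S"
| mulA: "x \<in> span_F S \<Longrightarrow> mulA d x \<in> span_F S"

(* extension of s^n to integer exponents: s^{-1} = 0, s^n = - s^{-n-2} for n <= -2 *)
definition red_exp :: "int \<Rightarrow> nat" where
  "red_exp n = (if n \<ge> 0 then nat n else nat (- n - 2))"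

definition sgn_exp :: "int \<Rightarrow> int" where
  "sgn_exp n = (if n \<ge> 0 then 1 else -1)"

definition Amono :: "int \<Rightarrow> int \<Rightarrow> int \<Rightarrow> int \<Rightarrow> FF" where
  "Amono e n1 n2 n3 =
     (if n1 = -1 \<or> n2 = -1 \<or> n3 = -1 then 0
      else Poly_Mapping.single (e, red_exp n1, red_exp n2, red_exp n3)
             (sgn_exp n1 * sgn_exp n2 * sgn_exp n3))"

definition R12 :: "int \<Rightarrow> int \<Rightarrow> int \<Rightarrow> FF" where
  "R12 n1 n2 n3 =
     - Amono (- n1 - n2 - 2) n1 n2 n3
     - Amono (- n1 - n2 + 2) (n1 - 2) (n2 - 2) n3
     - Amono (- n1 - n2) (n1 - 1) (n2 - 1) (n3 + 1)
     - Amono (- n1 - n2) (n1 - 1) (n2 - 1) (n3 - 1)"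

definition R12s :: "int \<Rightarrow> int \<Rightarrow> int \<Rightarrow> int \<Rightarrow> int \<Rightarrow> FF" where
  "R12s k1 k2 n1 n2 n3 = R12 n1 n2 n3 - R12 (- n1 + k1) (- n2 + k2) n3"

end

theory Submission
  imports Defs
begin

lemma Amono_refl3: "Amono e a b n = - Amono e a b (- n - 2)"
  unfolding Amono_def red_exp_def sgn_exp_def
  by (auto simp: single_uminus[symmetric])

lemma Amono_m1: "Amono e a b (-1) = 0"
  unfolding Amono_def by simp

lemma R12_refl3: "R12 a b n = - R12 a b (- n - 2)"
proof -
  have 1: "Amono e x y n = - Amono e x y (- n - 2)" for e x y
    by (rule Amono_refl3)
  have 2: "Amono e x y (n + 1) = - Amono e x y ((- n - 2) - 1)" for e x y
    using Amono_refl3[of e x y "n+1"] by (simp add: algebra_simps)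
  have 3: "Amono e x y (n - 1) = - Amono e x y ((- n - 2) + 1)" for e x y
    using Amono_refl3[of e x y "n - 1"] by (simp add: algebra_simps)
  show ?thesis unfolding R12_def 1 2 3 by (simp add: algebra_simps)
qed

lemma R12_m1: "R12 a b (-1) = 0"
proof -
  have "Amono e x y 0 = - Amono e x y (-2)" for e x y
    using Amono_refl3[of e x y 0] by simp
  then have h: "Amono e x y 0 = - Amono e x y (-2)" for e x y .
  show ?thesis unfolding R12_def by (simp add: Amono_m1 h)
qed

lemma R12s_m1: "R12s k1 k2 a b (-1) = 0"
  unfolding R12s_def by (simp add: R12_m1)

lemma R12s_refl3: "R12s k1 k2 a b n = - R12s k1 k2 a b (- n - 2)"
  unfolding R12s_def
  by (subst (1 2) R12_refl3) (simp add: algebra_simps)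

lemma R12s_sym: "R12s k1 k2 a b n = - R12s k1 k2 (- a + k1) (- b + k2) n"
  unfolding R12s_def by simp

lemma span_mono_sub0: "x \<in> span_F S \<Longrightarrow> S \<subseteq> span_F T \<Longrightarrow> x \<in> span_F T"
  by (induction rule: span_F.induct) (auto intro: span_F.intros)

lemma span_mono_sub: "S \<subseteq> span_F T \<Longrightarrow> span_F S \<subseteq> span_F T"
  using span_mono_sub0 by blast

theorem lemma4p1:
  fixes k1 k2 :: int
  assumes "k1 \<ge> 1" and "k2 \<ge> 1"
  shows "span_F {R12s k1 k2 n1 n2 n3 | n1 n2 n3. True}
       = span_F {R12s k1 k2 n1 n2 n3 | n1 n2 n3. 2 * n2 \<ge> k2 \<and> n3 \<ge> 0}"
    (is "span_F ?A = span_F ?B")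
proof
  show "span_F ?B \<subseteq> span_F ?A"
  proof (rule span_mono_sub)
    show "?B \<subseteq> span_F ?A"
    proof
      fix x assume "x \<in> ?B"
      then have "x \<in> ?A" by blast
      then show "x \<in> span_F ?A" by (rule span_F.gen)
    qed
  qed
next
  have pos: "R12s k1 k2 n1 n2 m \<in> span_F ?B" if "m \<ge> 0" for n1 n2 m
  proof (cases "2 * n2 \<ge> k2")
    case True
    then have "R12s k1 k2 n1 n2 m \<in> ?B" using that by blast
    then show ?thesis by (rule span_F.gen)
  next
    case False
    then have "R12s k1 k2 (- n1 + k1) (- n2 + k2) m \<in> span_F ?B"
      using that by (intro span_F.gen) (rule CollectI, rule exI[of _ "k1 - n1"], rule exI[of _ "k2 - n2"], rule exI[of _ m], auto)
    then have "- R12s k1 k2 (- n1 + k1) (- n2 + k2) m \<in> span_F ?B" by (rule span_F.neg)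
    then show ?thesis by (simp only: R12s_sym[of k1 k2 n1 n2 m, symmetric])
  qed
  have "?A \<subseteq> span_F ?B"
  proof
    fix x assume "x \<in> ?A"
    then obtain n1 n2 n3 where x: "x = R12s k1 k2 n1 n2 n3" by blast
    consider "n3 \<ge> 0" | "n3 = -1" | "n3 \<le> -2" by linarith
    then show "x \<in> span_F ?B"
    proof cases
      case 1 then show ?thesis using x pos by blast
    next
      case 2 then show ?thesis using x R12s_m1 span_F.zero by simp
    next
      case 3
      then have "R12s k1 k2 n1 n2 (- n3 - 2) \<in> span_F ?B" by (intro pos) simp
      then have "- R12s k1 k2 n1 n2 (- n3 - 2) \<in> span_F ?B" by (rule span_F.neg)
      then show ?thesis by (simp only: x R12s_refl3[of k1 k2 n1 n2 n3, symmetric])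
    qed
  qed
  then show "span_F ?A \<subseteq> span_F ?B" by (rule span_mono_sub)
qed

end
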